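(* Let $H$ be a multigraph of even order $p\ge 4$ and let $d\ge 2$ be an integer. Suppose there is a vertex $s$ with $\deg(s)\le d$, every other vertex has degree $d$ or $d+1$, and exactly $r \le d$ vertices have degree $d+1$. Suppose there exists $R \subsetneq V(H)\setminus\{s\}$ with $|R|$ odd, $|R|\ge 3$, $|\partial_H(R)| \le d$ and $\operatorname{sl}(\langle R\rangle, d) \le \operatorname{sl}(H-s, d)$. If $\Gamma(H)\le d+1$, then there is a subset $S\subseteq V(H)$ with $|S|$ odd and $1<|S|<p-1$ such that $\Delta(H_S)\le d+1$, $\Gamma(H_S)\le d+1$, and $H_S$ has at most $r$ vertices of degree $d+1$; and similarly $\Delta(H_{S^c})\le d+1$, $\Gamma(H_{S^c})\le d+1$, and $H_{S^c}$ has at most $r$ vertices of degree $d+1$, where $S^c=V(H)\setminus S$.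
   Context: Multigraphs are finite and loopless, multiple edges allowed. For $S \subseteq V(H)$, $\langle S\rangle$ is the induced subgraph and $\partial_H(S)$ is the set of edges of $H$ with exactly one end in $S$. For a multigraph $K$ of odd order $n(K)\ge 3$ with $e(K)$ edges, $t(K) = 2e(K)/(n(K)-1)$, and the $k$-slack is $\operatorname{sl}(K,k) = (k+1)(n(K)-1)/2 - e(K)$. $\Gamma(H) = \max\{t(\langle R\rangle) : R\subseteq V(H), |R| \text{ odd}, |R|\ge 3\}$. Shrinking: for a nonempty proper subset $S$ of $V(H)$, $H_S$ has vertex set $(V(H)\setminus S)\cup\{s'\}$ for a new vertex $s'$; its edges are the edges of $H - S$ together with, for each $u \notin S$, exactly as many edges $us'$ as there are edges of $H$ joining $u$ to vertices of $S$. *)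

theory Defs
  imports Complex_Main
begin

text \<open>A finite loopless multigraph on vertex set V, given by a symmetric
  edge-multiplicity function m (m u v = number of edges joining u and v).\<close>
definition multigraph :: "'a set \<Rightarrow> ('a \<Rightarrow> 'a \<Rightarrow> nat) \<Rightarrow> bool" where
  "multigraph V m \<longleftrightarrow> finite V \<and> (\<forall>u v. m u v = m v u) \<and> (\<forall>v. m v v = 0)
     \<and> (\<forall>u v. m u v \<noteq> 0 \<longrightarrow> u \<in> V \<and> v \<in> V)"

definition deg :: "'a set \<Rightarrow> ('a \<Rightarrow> 'a \<Rightarrow> nat) \<Rightarrow> 'a \<Rightarrow> nat" where
  "deg V m v = (\<Sum>u\<in>V. m v u)"

definition maxdeg :: "'a set \<Rightarrow> ('a \<Rightarrow> 'a \<Rightarrow> nat) \<Rightarrow> nat" where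
  "maxdeg V m = Max ((deg V m) ` V)"

text \<open>Number of edges of the induced subgraph on R (each edge counted once;
  the double sum counts every edge twice since m is symmetric and loopless).\<close>
definition edges_in :: "('a \<Rightarrow> 'a \<Rightarrow> nat) \<Rightarrow> 'a set \<Rightarrow> nat" where
  "edges_in m R = (\<Sum>u\<in>R. \<Sum>v\<in>R. m u v) div 2"

definition cut_size :: "'a set \<Rightarrow> ('a \<Rightarrow> 'a \<Rightarrow> nat) \<Rightarrow> 'a set \<Rightarrow> nat" where
  "cut_size V m R = (\<Sum>u\<in>R. \<Sum>v\<in>V - R. m u v)"

definition tval :: "('a \<Rightarrow> 'a \<Rightarrow> nat) \<Rightarrow> 'a set \<Rightarrow> real" where
  "tval m R = 2 * real (edges_in m R) / (real (card R) - 1)"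

definition slack :: "('a \<Rightarrow> 'a \<Rightarrow> nat) \<Rightarrow> 'a set \<Rightarrow> nat \<Rightarrow> real" where
  "slack m R k = (real k + 1) * (real (card R) - 1) / 2 - real (edges_in m R)"

definition Gamma :: "'a set \<Rightarrow> ('a \<Rightarrow> 'a \<Rightarrow> nat) \<Rightarrow> real" where
  "Gamma V m = Max {tval m R | R. R \<subseteq> V \<and> odd (card R) \<and> card R \<ge> 3}"

text \<open>Shrinking S to a new vertex: the new vertex is None, old vertices u are Some u.\<close>
definition shrink_V :: "'a set \<Rightarrow> 'a set \<Rightarrow> 'a option set" where
  "shrink_V V S = Some ` (V - S) \<union> {None}"

definition shrink_m :: "('a \<Rightarrow> 'a \<Rightarrow> nat) \<Rightarrow> 'a set \<Rightarrow> 'a option \<Rightarrow> 'a option \<Rightarrow> nat" where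
  "shrink_m m S x y = (case (x, y) of
      (Some u, Some v) \<Rightarrow> (if u \<in> S \<or> v \<in> S then 0 else m u v)
    | (Some u, None) \<Rightarrow> (if u \<in> S then 0 else (\<Sum>w\<in>S. m u w))
    | (None, Some v) \<Rightarrow> (if v \<in> S then 0 else (\<Sum>w\<in>S. m v w))
    | (None, None) \<Rightarrow> 0)"

definition num_deg :: "'a set \<Rightarrow> ('a \<Rightarrow> 'a \<Rightarrow> nat) \<Rightarrow> nat \<Rightarrow> nat" where
  "num_deg V m k = card {v \<in> V. deg V m v = k}"

end

theory Submission
  imports Defs
begin


definition ee :: "('a \<Rightarrow> 'a \<Rightarrow> nat) \<Rightarrow> 'a set \<Rightarrow> 'a set \<Rightarrow> nat" where
  "ee m A B = (\<Sum>u\<in>A. \<Sum>v\<in>B. m u v)"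

definition E2 :: "('a \<Rightarrow> 'a \<Rightarrow> nat) \<Rightarrow> 'a set \<Rightarrow> nat" where
  "E2 m X = ee m X X"

lemma ee_sym: assumes "\<forall>u v. m u v = m v u" shows "ee m A B = ee m B A"
  unfolding ee_def by (subst sum.swap) (metis (no_types, lifting) assms sum.cong)

lemma ee_union2: "finite B \<Longrightarrow> finite C \<Longrightarrow> B \<inter> C = {} \<Longrightarrow> ee m A (B \<union> C) = ee m A B + ee m A C"
  unfolding ee_def by (simp add: sum.union_disjoint sum.distrib)

lemma ee_union1: "finite A \<Longrightarrow> finite B \<Longrightarrow> A \<inter> B = {} \<Longrightarrow> ee m (A \<union> B) C = ee m A C + ee m B C"
  unfolding ee_def by (simp add: sum.union_disjoint)

lemma E2_union: assumes "\<forall>u v. m u v = m v u" "finite A" "finite B" "A \<inter> B = {}"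
  shows "E2 m (A \<union> B) = E2 m A + E2 m B + 2 * ee m A B"
proof -
  have "E2 m (A \<union> B) = ee m A (A \<union> B) + ee m B (A \<union> B)"
    unfolding E2_def using assms by (simp add: ee_union1)
  also have "\<dots> = ee m A A + ee m A B + (ee m B A + ee m B B)"
    using assms by (simp add: ee_union2)
  also have "ee m B A = ee m A B" using ee_sym[OF assms(1)] by simp
  finally show ?thesis unfolding E2_def by simp
qed

lemma E2_even: assumes "\<forall>u v. m u v = m v u" "\<forall>v. m v v = 0" "finite X"
  shows "E2 m X = 2 * edges_in m X"
proof -
  have "even (E2 m X)" using assms(3)
  proof (induction X rule: finite_induct)
    case empty then show ?case by (simp add: E2_def ee_def)
  next
    case (insert a X)
    have "E2 m (insert a X) = E2 m ({a} \<union> X)" by simp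
    also have "\<dots> = E2 m {a} + E2 m X + 2 * ee m {a} X"
      using E2_union[OF assms(1), of "{a}" X] insert by simp
    finally show ?case using insert assms(2) by (simp add: E2_def ee_def)
  qed
  then show ?thesis unfolding edges_in_def E2_def ee_def by simp
qed

lemma mg_sym: "multigraph V m \<Longrightarrow> \<forall>u v. m u v = m v u" by (simp add: multigraph_def)
lemma mg_loop: "multigraph V m \<Longrightarrow> \<forall>v. m v v = 0" by (simp add: multigraph_def)
lemma mg_fin: "multigraph V m \<Longrightarrow> finite V" by (simp add: multigraph_def)

lemma cut_ee: "cut_size V m X = ee m X (V - X)"
  unfolding cut_size_def ee_def by simp

lemma cut_compl: assumes "multigraph V m" "X \<subseteq> V" shows "cut_size V m (V - X) = cut_size V m X"
proof -
  have "V - (V - X) = X" using assms by auto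
  then show ?thesis unfolding cut_ee using ee_sym[OF mg_sym[OF assms(1)]] by metis
qed

lemma cut_single: assumes "multigraph V m" "w \<in> V" shows "cut_size V m {w} = deg V m w"
proof -
  have "deg V m w = m w w + (\<Sum>v\<in>V - {w}. m w v)"
    unfolding deg_def using assms mg_fin sum.remove by metis
  then show ?thesis using mg_loop[OF assms(1)] unfolding cut_size_def by simp
qed

lemma sum_deg: assumes "multigraph V m" "X \<subseteq> V"
  shows "(\<Sum>u\<in>X. deg V m u) = E2 m X + cut_size V m X"
proof -
  have f: "finite V" using mg_fin[OF assms(1)] .
  have "(\<Sum>u\<in>X. deg V m u) = ee m X (X \<union> (V - X))"
    unfolding deg_def ee_def using assms by (simp add: Un_absorb1)
  also have "\<dots> = ee m X X + ee m X (V - X)"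
    using f assms by (intro ee_union2) (auto intro: finite_subset)
  finally show ?thesis unfolding E2_def cut_ee .
qed

lemma part3: assumes mg: "multigraph V m" and "A \<subseteq> V" "B \<subseteq> V" "C \<subseteq> V"
  "A \<inter> B = {}" "A \<inter> C = {}" "B \<inter> C = {}" "A \<union> B \<union> C = V"
shows "cut_size V m A = ee m A B + ee m A C"
  "cut_size V m B = ee m A B + ee m B C"
  "cut_size V m C = ee m A C + ee m B C"
  "cut_size V m (A \<union> B) = ee m A C + ee m B C"
  "(\<Sum>u\<in>A. deg V m u) = E2 m A + ee m A B + ee m A C"
  "E2 m (A \<union> B) = E2 m A + E2 m B + 2 * ee m A B"
proof -
  have f: "finite V" using mg_fin[OF mg] .
  have fA: "finite A" "finite B" "finite C" using f assms finite_subset by metis+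
  have sy: "\<And>X Y. ee m X Y = ee m Y X" using ee_sym[OF mg_sym[OF mg]] by blast
  have d1: "V - A = B \<union> C" "V - B = A \<union> C" "V - C = A \<union> B" "V - (A \<union> B) = C"
    using assms by auto
  show c1: "cut_size V m A = ee m A B + ee m A C"
    unfolding cut_ee d1 using fA assms by (simp add: ee_union2)
  show "cut_size V m B = ee m A B + ee m B C"
    unfolding cut_ee d1 using fA assms by (simp add: ee_union2 sy[of B A] Int_commute)
  show "cut_size V m C = ee m A C + ee m B C"
    unfolding cut_ee d1 using fA assms by (simp add: ee_union2 sy[of C A] sy[of C B])
  show "cut_size V m (A \<union> B) = ee m A C + ee m B C"
    unfolding cut_ee d1 using fA assms by (simp add: ee_union1)
  show "(\<Sum>u\<in>A. deg V m u) = E2 m A + ee m A B + ee m A C"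
    using sum_deg[OF mg assms(2)] c1 by simp
  show "E2 m (A \<union> B) = E2 m A + E2 m B + 2 * ee m A B"
    using E2_union[OF mg_sym[OF mg]] fA assms by simp
qed



lemma shrink_V_eq: "shrink_V V X = insert None (Some ` (V - X))"
  unfolding shrink_V_def by auto

lemma shrink_sym: assumes "\<forall>u v. m u v = m v u" shows "\<forall>x y. shrink_m m X x y = shrink_m m X y x"
proof (intro allI)
  fix x y show "shrink_m m X x y = shrink_m m X y x"
    using assms by (cases x; cases y) (auto simp: shrink_m_def)
qed

lemma deg_shrink_Some: assumes mg: "multigraph V m" and X: "X \<subseteq> V" and u: "u \<in> V - X"
  shows "deg (shrink_V V X) (shrink_m m X) (Some u) = deg V m u"
proof -
  have f: "finite V" using mg_fin[OF mg] .
  have "deg (shrink_V V X) (shrink_m m X) (Some u)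
      = shrink_m m X (Some u) None + (\<Sum>x\<in>Some ` (V - X). shrink_m m X (Some u) x)"
    unfolding deg_def shrink_V_eq using f by (subst sum.insert) auto
  also have "(\<Sum>x\<in>Some ` (V - X). shrink_m m X (Some u) x) = (\<Sum>v\<in>V - X. shrink_m m X (Some u) (Some v))"
    by (simp add: sum.reindex)
  also have "\<dots> = (\<Sum>v\<in>V - X. m u v)"
    using u by (intro sum.cong) (auto simp: shrink_m_def)
  also have "shrink_m m X (Some u) None = (\<Sum>w\<in>X. m u w)" using u by (simp add: shrink_m_def)
  finally have "deg (shrink_V V X) (shrink_m m X) (Some u) = (\<Sum>w\<in>X. m u w) + (\<Sum>v\<in>V - X. m u v)" .
  also have "\<dots> = deg V m u"
    unfolding deg_def using sum.subset_diff[OF X f, of "m u"] by simp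
  finally show ?thesis .
qed

lemma deg_shrink_None: assumes mg: "multigraph V m" and X: "X \<subseteq> V"
  shows "deg (shrink_V V X) (shrink_m m X) None = cut_size V m X"
proof -
  have f: "finite V" using mg_fin[OF mg] .
  have "deg (shrink_V V X) (shrink_m m X) None
      = shrink_m m X None None + (\<Sum>x\<in>Some ` (V - X). shrink_m m X None x)"
    unfolding deg_def shrink_V_eq using f by (subst sum.insert) auto
  also have "(\<Sum>x\<in>Some ` (V - X). shrink_m m X None x) = (\<Sum>v\<in>V - X. shrink_m m X None (Some v))"
    by (simp add: sum.reindex)
  also have "\<dots> = (\<Sum>v\<in>V - X. \<Sum>w\<in>X. m v w)"
    by (intro sum.cong) (auto simp: shrink_m_def)
  also have "\<dots> = ee m (V - X) X" unfolding ee_def ..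
  also have "\<dots> = ee m X (V - X)" using ee_sym[OF mg_sym[OF mg]] by blast
  finally show ?thesis unfolding cut_ee by (simp add: shrink_m_def[of m X None None])
qed

lemma E2_shrink_Some: assumes "T0 \<subseteq> V - X"
  shows "E2 (shrink_m m X) (Some ` T0) = E2 m T0"
proof -
  have "E2 (shrink_m m X) (Some ` T0) = (\<Sum>u\<in>T0. \<Sum>v\<in>T0. shrink_m m X (Some u) (Some v))"
    unfolding E2_def ee_def by (simp add: sum.reindex)
  also have "\<dots> = E2 m T0" unfolding E2_def ee_def
    using assms by (intro sum.cong refl) (auto simp: shrink_m_def)
  finally show ?thesis .
qed

lemma E2_shrink_None: assumes mg: "multigraph V m" and T0: "T0 \<subseteq> V - X"
  shows "E2 (shrink_m m X) (insert None (Some ` T0)) = E2 m T0 + 2 * ee m T0 X"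
proof -
  have f: "finite T0" using mg_fin[OF mg] T0 finite_subset by blast
  have "E2 (shrink_m m X) ({None} \<union> Some ` T0) = E2 (shrink_m m X) {None} + E2 (shrink_m m X) (Some ` T0)
     + 2 * ee (shrink_m m X) {None} (Some ` T0)"
    using f by (intro E2_union shrink_sym mg_sym[OF mg]) auto
  also have "E2 (shrink_m m X) {None} = 0" by (simp add: E2_def ee_def shrink_m_def)
  also have "ee (shrink_m m X) {None} (Some ` T0) = (\<Sum>v\<in>T0. shrink_m m X None (Some v))"
    unfolding ee_def by (simp add: sum.reindex)
  also have "\<dots> = ee m T0 X" unfolding ee_def
    using T0 by (intro sum.cong refl) (auto simp: shrink_m_def)
  finally show ?thesis using E2_shrink_Some[OF T0] by simp
qed

lemma edges_E2: "edges_in m X = E2 m X div 2"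
  unfolding edges_in_def E2_def ee_def ..

lemma tval_le: assumes "E2 m T \<le> (d + 1) * (card T - 1)" "card T \<ge> 2"
  shows "tval m T \<le> real d + 1"
proof -
  have "2 * edges_in m T \<le> (d + 1) * (card T - 1)" using assms(1) unfolding edges_E2 by linarith
  then have "real (2 * edges_in m T) \<le> real ((d + 1) * (card T - 1))" by linarith
  then have a: "2 * real (edges_in m T) \<le> (real d + 1) * (real (card T) - 1)"
  proof -
    have e: "real ((d + 1) * (card T - 1)) = (real d + 1) * (real (card T) - 1)"
    proof -
      have "real (card T - 1) = real (card T) - 1" using assms(2) by (simp add: of_nat_diff)
      then show ?thesis by (simp only: of_nat_mult) simp
    qed
    show ?thesis using \<open>real (2 * edges_in m T) \<le> _\<close> unfolding e by simp
  qed
  have "real (card T) - 1 > 0" using assms(2) by simp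
  then show ?thesis unfolding tval_def using a by (simp add: divide_le_eq)
qed

lemma Gamma_ge: assumes "finite V" "R \<subseteq> V" "odd (card R)" "card R \<ge> 3"
  shows "tval m R \<le> Gamma V m"
proof -
  have "{tval m R | R. R \<subseteq> V \<and> odd (card R) \<and> card R \<ge> 3} \<subseteq> tval m ` Pow V" by auto
  then have "finite {tval m R | R. R \<subseteq> V \<and> odd (card R) \<and> card R \<ge> 3}"
    using assms(1) finite_subset by blast
  then show ?thesis unfolding Gamma_def using assms by (intro Max_ge) auto
qed

lemma shrink_good:
  assumes mg: "multigraph V m" and X: "X \<subseteq> V" and cutX: "cut_size V m X \<le> d"
    and degle: "\<forall>v\<in>V. deg V m v \<le> d + 1" and c2: "card (V - X) \<ge> 2"
    and Gam: "Gamma V m \<le> real d + 1"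
    and nofail: "\<forall>T0. T0 \<subseteq> V - X \<longrightarrow> even (card T0) \<longrightarrow> 2 \<le> card T0
                  \<longrightarrow> E2 m T0 + 2 * ee m T0 X \<le> (d + 1) * card T0"
  shows "maxdeg (shrink_V V X) (shrink_m m X) \<le> d + 1"
    "Gamma (shrink_V V X) (shrink_m m X) \<le> real d + 1"
    "num_deg (shrink_V V X) (shrink_m m X) (d + 1) \<le> num_deg V m (d + 1)"
proof -
  have f: "finite V" using mg_fin[OF mg] .
  let ?V = "shrink_V V X" and ?m = "shrink_m m X"
  have fV: "finite ?V" using f unfolding shrink_V_eq by simp
  have dg: "\<forall>x\<in>?V. deg ?V ?m x \<le> d + 1"
    using deg_shrink_None[OF mg X] deg_shrink_Some[OF mg X] cutX degle
    unfolding shrink_V_eq by auto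
  show "maxdeg ?V ?m \<le> d + 1"
    unfolding maxdeg_def using fV dg by (intro Max.boundedI) (auto simp: shrink_V_eq)
  have "{v \<in> ?V. deg ?V ?m v = d + 1} \<subseteq> Some ` {v \<in> V. deg V m v = d + 1}"
    using deg_shrink_None[OF mg X] deg_shrink_Some[OF mg X] cutX
    unfolding shrink_V_eq by auto
  then have "card {v \<in> ?V. deg ?V ?m v = d + 1} \<le> card (Some ` {v \<in> V. deg V m v = d + 1})"
    using f by (intro card_mono) auto
  also have "\<dots> \<le> card {v \<in> V. deg V m v = d + 1}" by (rule card_image_le) (use f in auto)
  finally show "num_deg ?V ?m (d + 1) \<le> num_deg V m (d + 1)" unfolding num_deg_def .
  let ?G = "{tval ?m R | R. R \<subseteq> ?V \<and> odd (card R) \<and> card R \<ge> 3}"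
  have "?G \<subseteq> tval ?m ` Pow ?V" by auto
  then have fG: "finite ?G" using fV finite_subset by blast
  have cV: "card ?V = card (V - X) + 1" unfolding shrink_V_eq using f
    by (simp add: card_image)
  obtain T3 where T3: "T3 \<subseteq> ?V" "card T3 = 3" using obtain_subset_with_card_n[of 3 ?V] cV c2 by force
  have neG: "?G \<noteq> {}" using T3 by auto
  have "\<forall>t\<in>?G. t \<le> real d + 1"
  proof
    fix t assume "t \<in> ?G"
    then obtain T where T: "t = tval ?m T" "T \<subseteq> ?V" "odd (card T)" "card T \<ge> 3" by blast
    define T0 where "T0 = Some -` T"
    have T0s: "T0 \<subseteq> V - X" using T(2) unfolding T0_def shrink_V_eq by auto
    have fT0: "finite T0" using T0s f finite_subset by blast
    show "t \<le> real d + 1"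
    proof (cases "None \<in> T")
      case True
      have Teq: "T = insert None (Some ` T0)" unfolding T0_def using True
        by (intro set_eqI, case_tac x) auto
      have ct: "card T = card T0 + 1" unfolding Teq using fT0 by (simp add: card_image)
      have "E2 ?m T = E2 m T0 + 2 * ee m T0 X" unfolding Teq by (rule E2_shrink_None[OF mg T0s])
      also have "\<dots> \<le> (d + 1) * card T0" using nofail T0s ct T by auto
      finally show ?thesis unfolding T(1) using ct T(4) by (intro tval_le) auto
    next
      case False
      have Teq: "T = Some ` T0" unfolding T0_def using False
        by (intro set_eqI, case_tac x) auto
      have ct: "card T = card T0" unfolding Teq by (simp add: card_image)
      have "tval ?m T = tval m T0"
        unfolding tval_def edges_E2 Teq E2_shrink_Some[OF T0s] ct[unfolded Teq] ..
      also have "\<dots> \<le> Gamma V m" using T0s T ct f by (intro Gamma_ge) auto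
      finally show ?thesis using T(1) Gam by simp
    qed
  qed
  then show "Gamma ?V ?m \<le> real d + 1" unfolding Gamma_def using fG neG by (intro Max.boundedI) auto
qed



theorem mainTheorem8:
  fixes V :: "'a set" and m :: "'a \<Rightarrow> 'a \<Rightarrow> nat" and s :: 'a and d r :: nat
  assumes mg: "multigraph V m"
    and p_even: "even (card V)" and p_ge: "card V \<ge> 4"
    and d_ge: "d \<ge> 2"
    and s_in: "s \<in> V" and deg_s: "deg V m s \<le> d"
    and deg_others: "\<forall>v \<in> V - {s}. deg V m v = d \<or> deg V m v = d + 1"
    and r_def: "num_deg V m (d + 1) = r" and r_le: "r \<le> d"
    and R_ex: "\<exists>R. R \<subset> V - {s} \<and> odd (card R) \<and> card R \<ge> 3 \<and> cut_size V m R \<le> d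
                 \<and> slack m R d \<le> slack m (V - {s}) d"
    and Gamma_le: "Gamma V m \<le> real d + 1"
  shows "\<exists>S. S \<subseteq> V \<and> odd (card S) \<and> 1 < card S \<and> card S < card V - 1
           \<and> maxdeg (shrink_V V S) (shrink_m m S) \<le> d + 1
           \<and> Gamma (shrink_V V S) (shrink_m m S) \<le> real d + 1
           \<and> num_deg (shrink_V V S) (shrink_m m S) (d + 1) \<le> r
           \<and> maxdeg (shrink_V V (V - S)) (shrink_m m (V - S)) \<le> d + 1
           \<and> Gamma (shrink_V V (V - S)) (shrink_m m (V - S)) \<le> real d + 1
           \<and> num_deg (shrink_V V (V - S)) (shrink_m m (V - S)) (d + 1) \<le> r"
proof -
  have f: "finite V" using mg_fin[OF mg] .
  have sy: "\<forall>u v. m u v = m v u" using mg_sym[OF mg] .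
  have lp: "\<forall>v. m v v = 0" using mg_loop[OF mg] .
  have degle: "\<forall>v\<in>V. deg V m v \<le> d + 1" using deg_s deg_others by force
  have degge: "\<And>v. v \<in> V - {s} \<Longrightarrow> d \<le> deg V m v" using deg_others by force
  have cVs: "card (V - {s}) = card V - 1" using s_in f by simp
  define P where "P S \<longleftrightarrow> S \<subseteq> V - {s} \<and> S \<noteq> V - {s} \<and> odd (card S) \<and> 3 \<le> card S
      \<and> cut_size V m S \<le> d \<and> (d+1) * card S + E2 m (V - {s}) \<le> (d+1) * (card V - 1) + E2 m S" for S
  obtain R where R: "R \<subset> V - {s}" "odd (card R)" "card R \<ge> 3" "cut_size V m R \<le> d"
    "slack m R d \<le> slack m (V - {s}) d" using R_ex by blast
  have PR: "P R"
  proof -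
    have fR: "finite R" using R(1) f finite_subset by blast
    have e1: "real (E2 m R) = 2 * real (edges_in m R)" using E2_even[OF sy lp fR] by simp
    have e2: "real (E2 m (V - {s})) = 2 * real (edges_in m (V - {s}))" using E2_even[OF sy lp] f by simp
    have c1: "real (card V - 1) = real (card V) - 1" using p_ge by (simp add: of_nat_diff)
    define q where "q = card V - 1"
    have "(real d + 1) * (real (card R) - 1) / 2 - real (edges_in m R)
        \<le> (real d + 1) * (real q - 1) / 2 - real (edges_in m (V - {s}))"
      using R(5) unfolding slack_def cVs q_def .
    then have "(real d + 1) * real (card R) + real (E2 m (V - {s}))
        \<le> (real d + 1) * real q + real (E2 m R)"
      unfolding e1 e2 by (simp add: field_simps)
    then have "real ((d+1) * card R + E2 m (V - {s})) \<le> real ((d+1) * q + E2 m R)"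
      unfolding of_nat_add of_nat_mult by simp
    then have "(d+1) * card R + E2 m (V - {s}) \<le> (d+1) * (card V - 1) + E2 m R"
      unfolding q_def by linarith
    then show ?thesis unfolding P_def using R by auto
  qed
  obtain S where PS: "P S" and Smin: "\<And>S'. P S' \<Longrightarrow> cut_size V m S \<le> cut_size V m S'"
    using ex_has_least_nat[of P R "cut_size V m", OF PR] by blast
  have S: "S \<subseteq> V - {s}" "S \<noteq> V - {s}" "odd (card S)" "3 \<le> card S" "cut_size V m S \<le> d"
    "(d+1) * card S + E2 m (V - {s}) \<le> (d+1) * (card V - 1) + E2 m S"
    using PS unfolding P_def by auto
  have SV: "S \<subseteq> V" using S(1) by auto
  have fS: "finite S" using SV f finite_subset by blast
  have cS: "card S < card V - 1" using S(1,2) f cVs psubset_card_mono[of "V - {s}" S] by auto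

  have nof1: "\<forall>T0. T0 \<subseteq> V - S \<longrightarrow> even (card T0) \<longrightarrow> 2 \<le> card T0
                  \<longrightarrow> E2 m T0 + 2 * ee m T0 S \<le> (d + 1) * card T0"
  proof (intro allI impI, rule ccontr)
    fix T assume T: "T \<subseteq> V - S" "even (card T)" "2 \<le> card T"
      and fail: "\<not> E2 m T + 2 * ee m T S \<le> (d + 1) * card T"
    define W where "W = V - S - T"
    have TV: "T \<subseteq> V" using T by auto
    have fT: "finite T" using TV f finite_subset by blast
    have fW: "finite W" unfolding W_def using f by simp
    have p3: "cut_size V m T = ee m T S + ee m T W"
      "cut_size V m S = ee m T S + ee m S W"
      "cut_size V m W = ee m T W + ee m S W"
      "cut_size V m (T \<union> S) = ee m T W + ee m S W"
      "(\<Sum>u\<in>T. deg V m u) = E2 m T + ee m T S + ee m T W"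
      "E2 m (T \<union> S) = E2 m T + E2 m S + 2 * ee m T S"
    proof -
      have a: "W \<subseteq> V" "T \<inter> S = {}" "T \<inter> W = {}" "S \<inter> W = {}" "T \<union> S \<union> W = V"
        unfolding W_def using T SV by auto
      show "cut_size V m T = ee m T S + ee m T W"
      "cut_size V m S = ee m T S + ee m S W"
      "cut_size V m W = ee m T W + ee m S W"
      "cut_size V m (T \<union> S) = ee m T W + ee m S W"
      "(\<Sum>u\<in>T. deg V m u) = E2 m T + ee m T S + ee m T W"
      "E2 m (T \<union> S) = E2 m T + E2 m S + 2 * ee m T S"
        using part3[OF mg TV SV a] by auto
    qed
    have cTS: "card (T \<union> S) = card T + card S" using fT fS T by (intro card_Un_disjoint) auto
    have cV: "card V = card T + card S + card W"
    proof -
      have "V = (T \<union> S) \<union> W" unfolding W_def using T SV by auto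
      moreover have "card ((T \<union> S) \<union> W) = card (T \<union> S) + card W"
        by (rule card_Un_disjoint) (use fT fS fW in \<open>auto simp: W_def\<close>)
      ultimately have "card V = card (T \<union> S) + card W" by simp
      then show ?thesis using cTS by simp
    qed
    show False
    proof (cases "s \<in> T")
      case False
      have degT: "(\<Sum>u\<in>T. deg V m u) \<le> (d + 1) * card T"
        using sum_bounded_above[of T "deg V m" "d+1"] degle TV by (auto simp: mult.commute)
      have lt: "cut_size V m (T \<union> S) < cut_size V m S" using p3 degT fail by linarith
      have m1: "(d+1) * card (T \<union> S) = (d+1) * card T + (d+1) * card S" unfolding cTS
        by (simp add: algebra_simps)
      have psi: "(d+1) * card (T \<union> S) + E2 m (V - {s}) < (d+1) * (card V - 1) + E2 m (T \<union> S)"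
        using S(6) m1 p3(6) fail by linarith
      have sub: "T \<union> S \<subseteq> V - {s}" using False T S(1) by auto
      have ne: "T \<union> S \<noteq> V - {s}"
      proof
        assume e: "T \<union> S = V - {s}"
        show False using psi unfolding e cVs by simp
      qed
      have o: "odd (card (T \<union> S))" using cTS T(2) S(3) by simp
      have c3: "3 \<le> card (T \<union> S)" using cTS S(4) by simp
      have "P (T \<union> S)" unfolding P_def
        using sub ne o c3 lt S(5) less_imp_le[OF psi] by simp
      then show False using Smin lt by fastforce
    next
      case True
      have degT0: "(\<Sum>u\<in>T - {s}. deg V m u) \<le> (d + 1) * card (T - {s})"
        using sum_bounded_above[of "T - {s}" "deg V m" "d+1"] degle TV by (auto simp: mult.commute)
      have "(\<Sum>u\<in>T. deg V m u) = deg V m s + (\<Sum>u\<in>T - {s}. deg V m u)"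
        using True fT sum.remove by metis
      moreover have "card T = card (T - {s}) + 1" using True fT T(3) by simp
      ultimately have degT: "(\<Sum>u\<in>T. deg V m u) + (d + 1) \<le> deg V m s + (d + 1) * card T"
        using degT0 by (simp add: algebra_simps)
      have cW: "cut_size V m W + 2 \<le> deg V m s" "cut_size V m W + 2 \<le> cut_size V m S"
        using p3 degT fail S(5) deg_s by linarith+
      have WVs: "W \<subseteq> V - {s}" unfolding W_def using True by auto
      have oW: "odd (card W)" using cV p_even T(2) S(3) by simp
      have W3: "3 \<le> card W"
      proof (rule ccontr)
        assume "\<not> 3 \<le> card W"
        then have "card W = 1" using oW by presburger
        then obtain w where w: "W = {w}" by (meson card_1_singletonE)
        then have "cut_size V m W = deg V m w" using cut_single[OF mg] WVs by auto
        moreover have "d \<le> deg V m w" using degge WVs w by auto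
        ultimately show False using cW deg_s by linarith
      qed
      have neW: "W \<noteq> V - {s}"
      proof
        assume "W = V - {s}"
        then have "S \<subseteq> W" using S(1) by simp
        then have "S = {}" unfolding W_def by auto
        then show False using S(4) by simp
      qed
      define Q where "Q = (V - {s}) - W"
      have fQ: "finite Q" unfolding Q_def using f by simp
      have QV: "Q \<subseteq> V" unfolding Q_def by auto
      have VsWQ: "V - {s} = W \<union> Q" "W \<inter> Q = {}" unfolding Q_def using WVs by auto
      have "card (W \<union> Q) = card W + card Q" using fW fQ VsWQ(2) by (rule card_Un_disjoint)
      then have cq: "card W + card Q = card V - 1" using cVs VsWQ(1) by simp
      have sVs: "(\<Sum>u\<in>V - {s}. deg V m u) = (\<Sum>u\<in>W. deg V m u) + (\<Sum>u\<in>Q. deg V m u)"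
        unfolding VsWQ(1) using fW fQ VsWQ(2) by (rule sum.union_disjoint)
      have dQ: "(\<Sum>u\<in>Q. deg V m u) \<le> (d + 1) * card Q"
        using sum_bounded_above[of Q "deg V m" "d+1"] degle QV by (auto simp: mult.commute)
      have e1: "(\<Sum>u\<in>V - {s}. deg V m u) = E2 m (V - {s}) + deg V m s"
        using sum_deg[OF mg, of "V - {s}"] cut_compl[OF mg, of "{s}"] cut_single[OF mg s_in] s_in
        by auto
      have e2: "(\<Sum>u\<in>W. deg V m u) = E2 m W + cut_size V m W"
        using sum_deg[OF mg, of W] WVs by auto
      have m2: "(d+1) * (card V - 1) = (d+1) * card W + (d+1) * card Q"
        unfolding cq[symmetric] by (simp add: distrib_left)
      have psi: "(d+1) * card W + E2 m (V - {s}) \<le> (d+1) * (card V - 1) + E2 m W"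
        using sVs dQ e1 e2 m2 cW by linarith
      have cWd: "cut_size V m W \<le> d" using cW(2) S(5) by linarith
      have "P W" unfolding P_def using WVs neW oW W3 cWd psi by simp
      then show False using Smin cW(2) by fastforce
    qed
  qed
  have nof2: "\<forall>T0. T0 \<subseteq> V - (V - S) \<longrightarrow> even (card T0) \<longrightarrow> 2 \<le> card T0
                  \<longrightarrow> E2 m T0 + 2 * ee m T0 (V - S) \<le> (d + 1) * card T0"
  proof (intro allI impI, rule ccontr)
    fix T assume T0: "T \<subseteq> V - (V - S)" "even (card T)" "2 \<le> card T"
      and fail: "\<not> E2 m T + 2 * ee m T (V - S) \<le> (d + 1) * card T"
    have TS: "T \<subseteq> S" using T0 by auto
    have TV: "T \<subseteq> V" using TS SV by auto
    have fT: "finite T" using TV f finite_subset by blast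
    have U: "T \<union> (S - T) = S" using TS by auto
    have p3: "cut_size V m (S - T) = ee m T (S - T) + ee m (S - T) (V - S)"
      "cut_size V m (T \<union> (S - T)) = ee m T (V - S) + ee m (S - T) (V - S)"
      "(\<Sum>u\<in>T. deg V m u) = E2 m T + ee m T (S - T) + ee m T (V - S)"
      "E2 m (T \<union> (S - T)) = E2 m T + E2 m (S - T) + 2 * ee m T (S - T)"
    proof -
      have a: "S - T \<subseteq> V" "V - S \<subseteq> V" "T \<inter> (S - T) = {}" "T \<inter> (V - S) = {}" "(S - T) \<inter> (V - S) = {}"
         "T \<union> (S - T) \<union> (V - S) = V" using TS SV by auto
      show "cut_size V m (S - T) = ee m T (S - T) + ee m (S - T) (V - S)"
      "cut_size V m (T \<union> (S - T)) = ee m T (V - S) + ee m (S - T) (V - S)"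
      "(\<Sum>u\<in>T. deg V m u) = E2 m T + ee m T (S - T) + ee m T (V - S)"
      "E2 m (T \<union> (S - T)) = E2 m T + E2 m (S - T) + 2 * ee m T (S - T)"
        using part3[OF mg TV a] by auto
    qed
    have degT: "(\<Sum>u\<in>T. deg V m u) \<le> (d + 1) * card T"
      using sum_bounded_above[of T "deg V m" "d+1"] degle TV by (auto simp: mult.commute)
    have lt: "cut_size V m (S - T) < cut_size V m S" using p3[unfolded U] degT fail by linarith
    have "card (T \<union> (S - T)) = card T + card (S - T)"
      by (rule card_Un_disjoint) (use fT fS in auto)
    then have cST: "card S = card T + card (S - T)" unfolding U .
    have m1: "(d+1) * card S = (d+1) * card T + (d+1) * card (S - T)" unfolding cST
      by (simp add: algebra_simps)
    have psi: "(d+1) * card (S - T) + E2 m (V - {s}) \<le> (d+1) * (card V - 1) + E2 m (S - T)"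
      using S(6) m1 p3[unfolded U] degT fail by linarith
    have sub: "S - T \<subseteq> V - {s}" using S(1) by auto
    have ne: "S - T \<noteq> V - {s}" using S(1,2) by auto
    have oW: "odd (card (S - T))" using cST S(3) T0(2) by simp
    have W3: "3 \<le> card (S - T)"
    proof (rule ccontr)
      assume "\<not> 3 \<le> card (S - T)"
      then have "card (S - T) = 1" using oW by presburger
      then obtain w where w: "S - T = {w}" by (meson card_1_singletonE)
      then have "cut_size V m (S - T) = deg V m w" using cut_single[OF mg] sub by auto
      moreover have "d \<le> deg V m w" using degge sub w by auto
      ultimately show False using lt S(5) by linarith
    qed
    have cWd: "cut_size V m (S - T) \<le> d" using lt S(5) by linarith
    have "P (S - T)" unfolding P_def using sub ne psi oW W3 cWd by simp
    then show False using Smin lt by fastforce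
  qed
  have c2a: "card (V - S) \<ge> 2" using cS SV f fS by (simp add: card_Diff_subset)
  have VVS: "V - (V - S) = S" using SV by auto
  have c2b: "card (V - (V - S)) \<ge> 2" using VVS S(4) by simp
  have cutc: "cut_size V m (V - S) \<le> d" using cut_compl[OF mg SV] S(5) by simp
  note g1 = shrink_good[OF mg SV S(5) degle c2a Gamma_le nof1]
  note g2 = shrink_good[OF mg _ cutc degle c2b Gamma_le nof2]
  show ?thesis
    apply (rule exI[of _ S])
    using g1 g2 SV S(3,4) cS r_def by simp
qed


end
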